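(* Let $s,t$ be processes, $\mathcal{Z}_s\in\mathrm{res}(s)$ with initial state $z_s$ and $\mathcal{Z}_t\in\mathrm{res}(t)$ with initial state $z_t$. Then $\Psi_{\mathcal{Z}_s}\equiv^\dagger\Psi_{\mathcal{Z}_t}$ if and only if $\Pr(\mathcal{C}^{\mathrm{w}}(z_s,\alpha))=\Pr(\mathcal{C}^{\mathrm{w}}(z_t,\alpha))$ for all $\alpha\in A^\star$.
   Context: PTS $(\mathcal{S},A_\tau,\to)$ with $A_\tau=A\cup\{\tau\}$, $\tau$ the silent action, finitely supported distributions; processes image-finite and finite. Computations $c=s_0\xrightarrow{a_1}\cdots\xrightarrow{a_n}s_n$ via transitions $s_{i-1}\xrightarrow{a_i}\pi_i$, $s_i\in\mathrm{supp}(\pi_i)$; $\Pr(c)=\prod\pi_i(s_i)$ (empty: 1); $\mathrm{tr}(c)=a_1\cdots a_n\in A_\tau^\star$; maximal = not a proper prefix of another computation from the same process; $\mathcal{C}_{\max}(z,\alpha)=\{c\in\mathcal{C}_{\max}(z):\mathrm{tr}(c)=\alpha\}$; $\Pr$ of a set is the sum. A resolution of $s$ is a PTS $\mathcal{Z}=(Z,A_\tau,\to_{\mathcal{Z}})$ with $\mathrm{corr}\colon Z\to\mathcal{S}$ and initial state $z_s$, $\mathrm{corr}(z_s)=s$, such that $z_s$ is in no target support, every other state is in the support of a target of a transition from a different state, every $z\xrightarrow{a}_{\mathcal{Z}}\pi$ is matched by $\mathrm{corr}(z)\xrightarrow{a}\pi'$ with $\pi(z')=\pi'(\mathrm{corr}(z'))$,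 and each state has at most one outgoing transition. Traces are equivalent, $\alpha\equiv\beta$, iff they coincide after deleting all $\tau$'s. For $\alpha\in A^\star$, $\mathcal{C}^{\mathrm{w}}(z,\alpha)$ is the set of computations $c$ from $z$ with $\mathrm{tr}(c)\equiv\alpha$ that are not proper prefixes of another computation $c'$ from $z$ with $\mathrm{tr}(c')\equiv\alpha$. Trace formulae $\Phi::=\top\mid\langle a\rangle\Phi$, $a\in A_\tau$; tracing formula $\Phi_\varepsilon=\top$, $\Phi_{a\alpha}=\langle a\rangle\Phi_\alpha$; $\Phi_\alpha\equiv\Phi_\beta$ iff $\alpha\equiv\beta$. Trace distribution formulae $\bigoplus_{i\in I}r_i\Phi_i$ ($I$ finite nonempty, $\Phi_i$ pairwise distinct, $r_i\in(0,1]$, $\sum r_i=1$) are viewed as distributions on trace formulae; $\Psi_1\equiv^\dagger\Psi_2$ iff they assign the same total probability to every $\equiv$-class. Mimicking formula: $\Psi_{\mathcal{Z}}=\bigoplus_{\alpha\in\mathrm{tr}(\mathcal{C}_{\max}(z))}\Pr(\mathcal{C}_{\max}(z,\alpha))\Phi_\alpha$. *)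

theory Defs
  imports "HOL-Probability.Probability_Mass_Function" "HOL-Library.Sublist"
begin

datatype 'a act = Tau | Act 'a

type_synonym ('s, 'a) pts = "('s \<times> 'a act \<times> 's pmf) set"

definition fin_supported :: "('s, 'a) pts \<Rightarrow> bool" where
  "fin_supported T \<longleftrightarrow> (\<forall>(s, a, \<pi>) \<in> T. finite (set_pmf \<pi>))"

definition image_finite :: "('s, 'a) pts \<Rightarrow> bool" where
  "image_finite T \<longleftrightarrow> (\<forall>s. finite {(a, \<pi>). (s, a, \<pi>) \<in> T})"

fun is_comp :: "('s, 'a) pts \<Rightarrow> 's \<Rightarrow> ('a act \<times> 's pmf \<times> 's) list \<Rightarrow> bool" where
  "is_comp T s [] = True"
| "is_comp T s ((a, \<pi>, s') # c) \<longleftrightarrow> (s, a, \<pi>) \<in> T \<and> s' \<in> set_pmf \<pi> \<and> is_comp T s' c"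

definition comps :: "('s, 'a) pts \<Rightarrow> 's \<Rightarrow> ('a act \<times> 's pmf \<times> 's) list set" where
  "comps T s = {c. is_comp T s c}"

definition Pr :: "('a act \<times> 's pmf \<times> 's) list \<Rightarrow> real" where
  "Pr c = prod_list (map (\<lambda>(a, \<pi>, s'). pmf \<pi> s') c)"

definition PrS :: "('a act \<times> 's pmf \<times> 's) list set \<Rightarrow> real" where
  "PrS C = (\<Sum>c\<in>C. Pr c)"

definition tr :: "('a act \<times> 's pmf \<times> 's) list \<Rightarrow> 'a act list" where
  "tr c = map fst c"

definition Cmax :: "('s, 'a) pts \<Rightarrow> 's \<Rightarrow> ('a act \<times> 's pmf \<times> 's) list set" where
  "Cmax T s = {c \<in> comps T s. \<not> (\<exists>c' \<in> comps T s. strict_prefix c c')}"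

definition Cmax_tr :: "('s, 'a) pts \<Rightarrow> 's \<Rightarrow> 'a act list \<Rightarrow> ('a act \<times> 's pmf \<times> 's) list set" where
  "Cmax_tr T s \<alpha> = {c \<in> Cmax T s. tr c = \<alpha>}"

definition finite_process :: "('s, 'a) pts \<Rightarrow> 's \<Rightarrow> bool" where
  "finite_process T s \<longleftrightarrow> finite (comps T s)"

definition is_resolution ::
  "('s, 'a) pts \<Rightarrow> 's \<Rightarrow> 'z set \<Rightarrow> ('z, 'a) pts \<Rightarrow> ('z \<Rightarrow> 's) \<Rightarrow> 'z \<Rightarrow> bool" where
  "is_resolution T s ZS TZ corr z0 \<longleftrightarrow>
     z0 \<in> ZS \<and>
     (\<forall>(z, a, \<pi>) \<in> TZ. z \<in> ZS \<and> set_pmf \<pi> \<subseteq> ZS) \<and>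
     corr z0 = s \<and>
     (\<forall>(z, a, \<pi>) \<in> TZ. z0 \<notin> set_pmf \<pi>) \<and>
     (\<forall>z \<in> ZS - {z0}. \<exists>z' a \<pi>. (z', a, \<pi>) \<in> TZ \<and> z' \<noteq> z \<and> z \<in> set_pmf \<pi>) \<and>
     (\<forall>(z, a, \<pi>) \<in> TZ. \<exists>\<pi>'. (corr z, a, \<pi>') \<in> T \<and>
          (\<forall>z' \<in> set_pmf \<pi>. pmf \<pi> z' = pmf \<pi>' (corr z'))) \<and>
     (\<forall>z a1 \<pi>1 a2 \<pi>2. (z, a1, \<pi>1) \<in> TZ \<longrightarrow> (z, a2, \<pi>2) \<in> TZ \<longrightarrow> a1 = a2 \<and> \<pi>1 = \<pi>2)"

definition del_tau :: "'a act list \<Rightarrow> 'a list" where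
  "del_tau \<alpha> = List.map_filter (\<lambda>x. case x of Tau \<Rightarrow> None | Act a \<Rightarrow> Some a) \<alpha>"

definition trace_equiv :: "'a act list \<Rightarrow> 'a act list \<Rightarrow> bool" where
  "trace_equiv \<alpha> \<beta> \<longleftrightarrow> del_tau \<alpha> = del_tau \<beta>"

definition Cw :: "('s, 'a) pts \<Rightarrow> 's \<Rightarrow> 'a list \<Rightarrow> ('a act \<times> 's pmf \<times> 's) list set" where
  "Cw T z \<alpha> = {c \<in> comps T z. trace_equiv (tr c) (map Act \<alpha>) \<and>
      \<not> (\<exists>c' \<in> comps T z. trace_equiv (tr c') (map Act \<alpha>) \<and> strict_prefix c c')}"

datatype 'a tformula = Top | Diam "'a act" "'a tformula"

fun tracing_formula :: "'a act list \<Rightarrow> 'a tformula" where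
  "tracing_formula [] = Top"
| "tracing_formula (a # \<alpha>) = Diam a (tracing_formula \<alpha>)"

fun ftrace :: "'a tformula \<Rightarrow> 'a act list" where
  "ftrace Top = []"
| "ftrace (Diam a \<Phi>) = a # ftrace \<Phi>"

definition formula_equiv :: "'a tformula \<Rightarrow> 'a tformula \<Rightarrow> bool" where
  "formula_equiv \<Phi> \<Psi> \<longleftrightarrow> trace_equiv (ftrace \<Phi>) (ftrace \<Psi>)"

text \<open>A trace distribution formula (+)_{i in I} r_i Phi_i is represented as the
  distribution on trace formulae it denotes, i.e. a weight function whose
  support is the finite index set of formulae.\<close>
type_synonym 'a tdformula = "'a tformula \<Rightarrow> real"

definition tdf_equiv :: "'a tdformula \<Rightarrow> 'a tdformula \<Rightarrow> bool" where
  "tdf_equiv \<Psi>1 \<Psi>2 \<longleftrightarrow>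
     (\<forall>\<Phi>. (\<Sum>\<Phi>' \<in> {\<Phi>'. \<Psi>1 \<Phi>' \<noteq> 0 \<and> formula_equiv \<Phi>' \<Phi>}. \<Psi>1 \<Phi>') =
          (\<Sum>\<Phi>' \<in> {\<Phi>'. \<Psi>2 \<Phi>' \<noteq> 0 \<and> formula_equiv \<Phi>' \<Phi>}. \<Psi>2 \<Phi>'))"

text \<open>Mimicking formula of a resolution with initial state z:
  (+)_{alpha in tr(Cmax(z))} Pr(Cmax(z, alpha)) Phi_alpha.\<close>
definition mimicking :: "('z, 'a) pts \<Rightarrow> 'z \<Rightarrow> 'a tdformula" where
  "mimicking TZ z = (\<lambda>\<Phi>. if \<exists>\<alpha> \<in> tr ` Cmax TZ z. \<Phi> = tracing_formula \<alpha>
      then PrS (Cmax_tr TZ z (ftrace \<Phi>)) else 0)"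

end

theory Submission
  imports Defs
begin

definition detp :: "('z,'a) pts \<Rightarrow> bool" where
  "detp TZ \<longleftrightarrow> (\<forall>z a1 \<pi>1 a2 \<pi>2. (z,a1,\<pi>1)\<in>TZ \<longrightarrow> (z,a2,\<pi>2)\<in>TZ \<longrightarrow> a1=a2 \<and> \<pi>1=\<pi>2)"

definition KK :: "('z,'a) pts \<Rightarrow> 'z \<Rightarrow> ('a act list \<Rightarrow> bool) \<Rightarrow> ('a act list \<Rightarrow> bool) \<Rightarrow> ('a act \<times> 'z pmf \<times> 'z) list set" where
  "KK TZ z Q R = {c \<in> comps TZ z. Q (tr c) \<and> R (tr c) \<and> \<not> (\<exists>c'\<in>comps TZ z. Q (tr c') \<and> strict_prefix c c')}"

lemma comps_Nil[simp]: "[] \<in> comps TZ z" by (simp add: comps_def)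
lemma comps_Cons[simp]: "(a,\<pi>,z')#c \<in> comps TZ z \<longleftrightarrow> (z,a,\<pi>)\<in>TZ \<and> z'\<in>set_pmf \<pi> \<and> c \<in> comps TZ z'"
  by (simp add: comps_def)
lemma tr_simps[simp]: "tr [] = []" "tr (x#c) = fst x # tr c" by (simp_all add: tr_def)

lemma comps_cases:
  assumes "c \<in> comps TZ z"
  obtains "c = []" | a \<pi> z' c' where "c = (a,\<pi>,z')#c'" "(z,a,\<pi>)\<in>TZ" "z'\<in>set_pmf \<pi>" "c'\<in>comps TZ z'"
proof (cases c)
  case Nil then show ?thesis using that by blast
next
  case (Cons x c')
  obtain a \<pi> z' where "x = (a,\<pi>,z')" by (rule prod_cases3)
  then show ?thesis using that assms Cons by simp
qed

lemma KK_notrans: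
  assumes "\<forall>a \<pi>. (z,a,\<pi>)\<notin>TZ"
  shows "KK TZ z Q R = (if Q [] \<and> R [] then {[]} else {})"
proof -
  have "comps TZ z = {[]}"
  proof (rule set_eqI)
    fix c show "c \<in> comps TZ z \<longleftrightarrow> c \<in> {[]}" 
    proof
      assume "c \<in> comps TZ z" then show "c \<in> {[]}" by (rule comps_cases) (use assms in auto)
    qed simp
  qed
  then show ?thesis unfolding KK_def by (intro set_eqI) (simp; metis tr_simps(1))
qed


lemma KK_trans:
  assumes det: "detp TZ" and tz: "(z,a,\<pi>)\<in>TZ"
  shows "KK TZ z Q R = (if Q [] \<and> R [] \<and> \<not>(\<exists>z'\<in>set_pmf \<pi>. \<exists>c'\<in>comps TZ z'. Q (a # tr c')) then {[]} else {})
     \<union> (\<Union>z'\<in>set_pmf \<pi>. (\<lambda>c. (a,\<pi>,z')#c) ` KK TZ z' (\<lambda>\<alpha>. Q (a#\<alpha>)) (\<lambda>\<alpha>. R (a#\<alpha>)))"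
    (is "_ = ?A \<union> ?B")
proof -
  have tz': "b = a \<and> \<rho> = \<pi>" if "(z,b,\<rho>)\<in>TZ" for b \<rho> using det tz that unfolding detp_def by blast
  have ne: "(\<exists>c'\<in>comps TZ z. Q (tr c') \<and> strict_prefix [] c') \<longleftrightarrow> (\<exists>z'\<in>set_pmf \<pi>. \<exists>c'\<in>comps TZ z'. Q (a # tr c'))"
  proof
    assume "\<exists>c'\<in>comps TZ z. Q (tr c') \<and> strict_prefix [] c'"
    then obtain c' where c': "c' \<in> comps TZ z" "Q (tr c')" "c' \<noteq> []" by auto
    from c'(1) show "\<exists>z'\<in>set_pmf \<pi>. \<exists>c'\<in>comps TZ z'. Q (a # tr c')"
    proof (rule comps_cases)
      fix b \<rho> y d assume "c' = (b,\<rho>,y)#d" "(z,b,\<rho>)\<in>TZ" "y\<in>set_pmf \<rho>" "d\<in>comps TZ y"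
      then show ?thesis using c'(2) tz'[of b \<rho>] by auto
    qed (use c' in simp)
  next
    assume "\<exists>z'\<in>set_pmf \<pi>. \<exists>c'\<in>comps TZ z'. Q (a # tr c')"
    then obtain z' c' where "z'\<in>set_pmf \<pi>" "c'\<in>comps TZ z'" "Q (a # tr c')" by blast
    then show "\<exists>c'\<in>comps TZ z. Q (tr c') \<and> strict_prefix [] c'"
      using tz by (intro bexI[of _ "(a,\<pi>,z')#c'"]) simp_all
  qed
  have ext: "(\<exists>d\<in>comps TZ z. Q (tr d) \<and> strict_prefix ((a,\<pi>,y)#c') d) \<longleftrightarrow>
             (\<exists>d'\<in>comps TZ y. Q (a # tr d') \<and> strict_prefix c' d')" if y: "y \<in> set_pmf \<pi>" for y c'
  proof
    assume "\<exists>d\<in>comps TZ z. Q (tr d) \<and> strict_prefix ((a,\<pi>,y)#c') d"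
    then obtain d where d: "d\<in>comps TZ z" "Q (tr d)" "strict_prefix ((a,\<pi>,y)#c') d" by blast
    from d(1) show "\<exists>d'\<in>comps TZ y. Q (a # tr d') \<and> strict_prefix c' d'"
    proof (rule comps_cases)
      fix b \<rho> y' d' assume "d = (b,\<rho>,y')#d'" "(z,b,\<rho>)\<in>TZ" "y'\<in>set_pmf \<rho>" "d'\<in>comps TZ y'"
      then show ?thesis using d(2,3) by auto
    qed (use d in simp)
  next
    assume "\<exists>d'\<in>comps TZ y. Q (a # tr d') \<and> strict_prefix c' d'"
    then obtain d' where "d'\<in>comps TZ y" "Q (a # tr d')" "strict_prefix c' d'" by blast
    then show "\<exists>d\<in>comps TZ z. Q (tr d) \<and> strict_prefix ((a,\<pi>,y)#c') d"
      using y tz by (intro bexI[of _ "(a,\<pi>,y)#d'"]) simp_all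
  qed
  show ?thesis
  proof (rule set_eqI)
    fix c show "c \<in> KK TZ z Q R \<longleftrightarrow> c \<in> ?A \<union> ?B"
    proof (cases c)
      case Nil
      then show ?thesis using ne unfolding KK_def by auto
    next
      case (Cons st c')
      obtain b \<rho> y where st: "st = (b,\<rho>,y)" by (rule prod_cases3)
      show ?thesis
      proof (cases "b = a \<and> \<rho> = \<pi> \<and> y \<in> set_pmf \<pi>")
        case True
        then have yin: "y \<in> set_pmf \<pi>" by simp
        have "c \<in> KK TZ z Q R \<longleftrightarrow> (c' \<in> comps TZ y \<and> Q (a#tr c') \<and> R (a#tr c') \<and> \<not>(\<exists>d\<in>comps TZ z. Q (tr d) \<and> strict_prefix ((a,\<pi>,y)#c') d))"
          unfolding KK_def mem_Collect_eq using Cons st True tz by simp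
        also have "\<dots> \<longleftrightarrow> c' \<in> KK TZ y (\<lambda>\<alpha>. Q (a#\<alpha>)) (\<lambda>\<alpha>. R (a#\<alpha>))"
          unfolding KK_def mem_Collect_eq ext[OF yin] by simp
        moreover have "c \<notin> ?A" using Cons by simp
        moreover have "c \<in> ?B \<longleftrightarrow> c' \<in> KK TZ y (\<lambda>\<alpha>. Q (a#\<alpha>)) (\<lambda>\<alpha>. R (a#\<alpha>))"
          using Cons st True by blast
        ultimately show ?thesis by simp
      next
        case False
        then have "c \<notin> comps TZ z" using Cons st tz' by auto
        then have "c \<notin> KK TZ z Q R" by (simp add: KK_def)
        moreover have "c \<notin> ?A" using Cons by simp
        moreover have "c \<notin> ?B" using Cons st False by blast
        ultimately show ?thesis by simp
      qed
    qed
  qed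
qed
lemma Pr_Nil[simp]: "Pr [] = 1" by (simp add: Pr_def)
lemma Pr_Cons[simp]: "Pr ((a,\<pi>,z')#c) = pmf \<pi> z' * Pr c" by (simp add: Pr_def)

lemma PrS_UN:
  assumes "finite S" "\<And>z'. z'\<in>S \<Longrightarrow> finite (C z')"
  shows "PrS (\<Union>z'\<in>S. (\<lambda>c. (a,\<pi>,z')#c) ` C z') = (\<Sum>z'\<in>S. pmf \<pi> z' * PrS (C z'))"
proof -
  have "PrS (\<Union>z'\<in>S. (\<lambda>c. (a,\<pi>,z')#c) ` C z') = (\<Sum>z'\<in>S. PrS ((\<lambda>c. (a,\<pi>,z')#c) ` C z'))"
    unfolding PrS_def by (rule sum.UNION_disjoint) (use assms in auto)
  also have "\<dots> = (\<Sum>z'\<in>S. pmf \<pi> z' * PrS (C z'))"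
  proof (rule sum.cong[OF refl])
    fix z' assume "z' \<in> S"
    have "PrS ((\<lambda>c. (a,\<pi>,z')#c) ` C z') = (\<Sum>c\<in>C z'. Pr ((a,\<pi>,z')#c))"
      unfolding PrS_def by (rule sum.reindex_cong[where l="\<lambda>c. (a,\<pi>,z')#c"]) (auto simp: inj_on_def)
    also have "\<dots> = pmf \<pi> z' * PrS (C z')" by (simp add: PrS_def sum_distrib_left)
    finally show "PrS ((\<lambda>c. (a,\<pi>,z')#c) ` C z') = pmf \<pi> z' * PrS (C z')" .
  qed
  finally show ?thesis .
qed

lemma PrS_empty[simp]: "PrS {} = 0" by (simp add: PrS_def)
lemma PrS_single[simp]: "PrS {[]} = 1" by (simp add: PrS_def)

lemma PrS_single_un:
  assumes "finite U" "[] \<notin> U"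
  shows "PrS ({[]} \<union> U) = 1 + PrS U"
  using assms unfolding PrS_def by (simp add: sum.insert)

lemma KK_False1[simp]: "KK TZ z (\<lambda>_. False) R = {}" by (simp add: KK_def)
lemma KK_False2[simp]: "KK TZ z Q (\<lambda>_. False) = {}" by (simp add: KK_def)
lemma KK_sub: "KK TZ z Q R \<subseteq> comps TZ z" by (auto simp: KK_def)

lemma fin_succ:
  assumes "finite (comps TZ z)" "(z,a,\<pi>)\<in>TZ"
  shows "finite (set_pmf \<pi>)" "z'\<in>set_pmf \<pi> \<Longrightarrow> finite (comps TZ z')"
proof -
  have "(\<lambda>z'. [(a,\<pi>,z')]) ` set_pmf \<pi> \<subseteq> comps TZ z" using assms(2) by auto
  then have "finite ((\<lambda>z'. [(a,\<pi>,z')]) ` set_pmf \<pi>)" using assms(1) finite_subset by blast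
  then show "finite (set_pmf \<pi>)" by (rule finite_imageD) (auto simp: inj_on_def)
next
  assume z': "z'\<in>set_pmf \<pi>"
  have "(\<lambda>c. (a,\<pi>,z')#c) ` comps TZ z' \<subseteq> comps TZ z" using assms(2) z' by auto
  then have "finite ((\<lambda>c. (a,\<pi>,z')#c) ` comps TZ z')" using assms(1) finite_subset by blast
  then show "finite (comps TZ z')" by (rule finite_imageD) (auto simp: inj_on_def)
qed

lemma len_succ:
  assumes "\<forall>c\<in>comps TZ z. length c \<le> Suc n" "(z,a,\<pi>)\<in>TZ" "z'\<in>set_pmf \<pi>"
  shows "\<forall>c\<in>comps TZ z'. length c \<le> n"
proof
  fix c assume "c \<in> comps TZ z'"
  then have "(a,\<pi>,z')#c \<in> comps TZ z" using assms by simp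
  then show "length c \<le> n" using assms(1) by fastforce
qed

lemma len0:
  assumes "\<forall>c\<in>comps TZ z. length c \<le> 0"
  shows "\<forall>a \<pi>. (z,a,\<pi>)\<notin>TZ"
proof (intro allI notI)
  fix a \<pi> assume tz: "(z,a,\<pi>)\<in>TZ"
  obtain z' where "z' \<in> set_pmf \<pi>" using set_pmf_not_empty[of \<pi>] by blast
  then have "[(a,\<pi>,z')] \<in> comps TZ z" using tz by simp
  then show False using assms by fastforce
qed

lemma ex_succ: "\<exists>z'\<in>set_pmf \<pi>. \<exists>c'\<in>comps TZ z'. tr c' = []"
proof -
  obtain z' where "z' \<in> set_pmf \<pi>" using set_pmf_not_empty[of \<pi>] by blast
  then show ?thesis by (intro bexI[of _ z'] bexI[of _ "[]"]) auto
qed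

lemma KK_ones:
  assumes "detp TZ" "finite (comps TZ z)" "\<forall>c\<in>comps TZ z. length c \<le> n"
  shows "PrS (KK TZ z (\<lambda>_. True) (\<lambda>_. True)) = 1"
  using assms(2,3)
proof (induction n arbitrary: z)
  case 0
  then show ?case using KK_notrans[OF len0[OF 0(2)]] by simp
next
  case (Suc n)
  show ?case
  proof (cases "\<exists>a \<pi>. (z,a,\<pi>)\<in>TZ")
    case False
    then show ?thesis using KK_notrans[of z TZ] by simp
  next
    case True
    then obtain a \<pi> where tz: "(z,a,\<pi>)\<in>TZ" by blast
    have fin: "finite (set_pmf \<pi>)" using fin_succ(1)[OF Suc(2) tz] .
    have "(\<exists>z'\<in>set_pmf \<pi>. \<exists>c'\<in>comps TZ z'. True)" using ex_succ[of \<pi> TZ] by blast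
    then have "KK TZ z (\<lambda>_. True) (\<lambda>_. True) = (\<Union>z'\<in>set_pmf \<pi>. (\<lambda>c. (a,\<pi>,z')#c) ` KK TZ z' (\<lambda>_. True) (\<lambda>_. True))"
      using KK_trans[OF assms(1) tz, of "\<lambda>_. True" "\<lambda>_. True"] by simp
    also have "PrS \<dots> = (\<Sum>z'\<in>set_pmf \<pi>. pmf \<pi> z' * PrS (KK TZ z' (\<lambda>_. True) (\<lambda>_. True)))"
      by (rule PrS_UN[OF fin]) (meson KK_sub finite_subset fin_succ(2)[OF Suc(2) tz])
    also have "\<dots> = (\<Sum>z'\<in>set_pmf \<pi>. pmf \<pi> z')"
      by (rule sum.cong[OF refl]) (simp add: Suc.IH fin_succ(2)[OF Suc(2) tz] len_succ[OF Suc(3) tz])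
    also have "\<dots> = 1" by (rule sum_pmf_eq_1[OF fin]) simp
    finally show ?thesis .
  qed
qed

lemma del_tau_simps[simp]: "del_tau [] = []" "del_tau (Tau#\<alpha>) = del_tau \<alpha>" "del_tau (Act x#\<alpha>) = x # del_tau \<alpha>"
  by (simp_all add: del_tau_def)

lemma del_tau_map_Act[simp]: "del_tau (map Act \<beta>) = \<beta>"
  by (induction \<beta>) auto

lemma ex_succ2: "P [a] \<Longrightarrow> \<exists>z'\<in>set_pmf \<pi>. \<exists>c'\<in>comps TZ z'. P (a # tr c')"
proof -
  assume p: "P [a]"
  obtain z' c' where "z'\<in>set_pmf \<pi>" "c'\<in>comps TZ z'" "tr c' = []" using ex_succ[of \<pi> TZ] by blast
  then show ?thesis using p by (intro bexI[of _ z'] bexI[of _ c']) simp_all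
qed

lemma KK_main:
  assumes det: "detp TZ" 
  shows "finite (comps TZ z) \<Longrightarrow> \<forall>c\<in>comps TZ z. length c \<le> n \<Longrightarrow>
    PrS (KK TZ z (\<lambda>\<alpha>. del_tau \<alpha> = \<beta>) (\<lambda>_. True)) = PrS (KK TZ z (\<lambda>_. True) (\<lambda>\<alpha>. prefix \<beta> (del_tau \<alpha>)))"
proof (induction n arbitrary: z \<beta>)
  case 0
  then show ?case using KK_notrans[OF len0[OF 0(2)]] by simp
next
  case (Suc n)
  show ?case
  proof (cases "\<exists>a \<pi>. (z,a,\<pi>)\<in>TZ")
    case False
    then show ?thesis using KK_notrans[of z TZ] by simp
  next
    case True
    then obtain a \<pi> where tz: "(z,a,\<pi>)\<in>TZ" by blast
    have fin: "finite (set_pmf \<pi>)" using fin_succ(1)[OF Suc(2) tz] .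
    have finz: "finite (comps TZ z')" if "z' \<in> set_pmf \<pi>" for z' using fin_succ(2)[OF Suc(2) tz that] .
    have lenz: "\<forall>c\<in>comps TZ z'. length c \<le> n" if "z' \<in> set_pmf \<pi>" for z' using len_succ[OF Suc(3) tz that] .
    have finK: "finite (KK TZ z' Q R)" if "z' \<in> set_pmf \<pi>" for z' Q R by (rule finite_subset[OF KK_sub finz[OF that]])
    have IH: "PrS (KK TZ z' (\<lambda>\<alpha>. del_tau \<alpha> = \<gamma>) (\<lambda>_. True)) = PrS (KK TZ z' (\<lambda>_. True) (\<lambda>\<alpha>. prefix \<gamma> (del_tau \<alpha>)))"
      if "z' \<in> set_pmf \<pi>" for z' \<gamma> using Suc.IH[OF finz[OF that] lenz[OF that]] .
    have ones: "PrS (KK TZ z' (\<lambda>_. True) (\<lambda>_. True)) = 1" if "z' \<in> set_pmf \<pi>" for z'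
      using KK_ones[OF det finz[OF that] lenz[OF that]] .
    have ex: "\<exists>z'\<in>set_pmf \<pi>. \<exists>c'\<in>comps TZ z'. tr c' = []" by (rule ex_succ)
    note KT = KK_trans[OF det tz]
    have UNeq: "PrS (\<Union>z'\<in>set_pmf \<pi>. (\<lambda>c. (a,\<pi>,z')#c) ` KK TZ z' Q1 R1) = PrS (\<Union>z'\<in>set_pmf \<pi>. (\<lambda>c. (a,\<pi>,z')#c) ` KK TZ z' Q2 R2)"
      if "\<And>z'. z'\<in>set_pmf \<pi> \<Longrightarrow> PrS (KK TZ z' Q1 R1) = PrS (KK TZ z' Q2 R2)" for Q1 R1 Q2 R2
      using that by (simp add: PrS_UN[OF fin] finK)
    show ?thesis
    proof (cases a)
      case Tau
      have L: "KK TZ z (\<lambda>\<alpha>. del_tau \<alpha> = \<beta>) (\<lambda>_. True) = (\<Union>z'\<in>set_pmf \<pi>. (\<lambda>c. (a,\<pi>,z')#c) ` KK TZ z' (\<lambda>\<alpha>. del_tau \<alpha> = \<beta>) (\<lambda>_. True))"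
        using KT[of "\<lambda>\<alpha>. del_tau \<alpha> = \<beta>" "\<lambda>_. True"] ex_succ2[of "\<lambda>\<alpha>. del_tau \<alpha> = []" Tau \<pi> TZ] Tau by (cases "\<beta> = []") auto
      have R: "KK TZ z (\<lambda>_. True) (\<lambda>\<alpha>. prefix \<beta> (del_tau \<alpha>)) = (\<Union>z'\<in>set_pmf \<pi>. (\<lambda>c. (a,\<pi>,z')#c) ` KK TZ z' (\<lambda>_. True) (\<lambda>\<alpha>. prefix \<beta> (del_tau \<alpha>)))"
        using KT[of "\<lambda>_. True" "\<lambda>\<alpha>. prefix \<beta> (del_tau \<alpha>)"] ex Tau by auto
      show ?thesis unfolding L R by (rule UNeq) (rule IH)
    next
      case (Act x)
      show ?thesis
      proof (cases \<beta>)
        case Nil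
        have L: "KK TZ z (\<lambda>\<alpha>. del_tau \<alpha> = \<beta>) (\<lambda>_. True) = {[]} \<union> (\<Union>z'\<in>set_pmf \<pi>. (\<lambda>c. (a,\<pi>,z')#c) ` {})"
          using KT[of "\<lambda>\<alpha>. del_tau \<alpha> = \<beta>" "\<lambda>_. True"] Act Nil by simp
        have R: "KK TZ z (\<lambda>_. True) (\<lambda>\<alpha>. prefix \<beta> (del_tau \<alpha>)) = (\<Union>z'\<in>set_pmf \<pi>. (\<lambda>c. (a,\<pi>,z')#c) ` KK TZ z' (\<lambda>_. True) (\<lambda>_. True))"
          using KT[of "\<lambda>_. True" "\<lambda>\<alpha>. prefix \<beta> (del_tau \<alpha>)"] ex Act Nil by auto
        have "PrS (\<Union>z'\<in>set_pmf \<pi>. (\<lambda>c. (a,\<pi>,z')#c) ` KK TZ z' (\<lambda>_. True) (\<lambda>_. True)) = (\<Sum>z'\<in>set_pmf \<pi>. pmf \<pi> z')"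
          by (simp add: PrS_UN[OF fin] finK ones)
        also have "\<dots> = 1" by (rule sum_pmf_eq_1[OF fin]) simp
        finally show ?thesis unfolding L R by simp
      next
        case (Cons y \<beta>')
        show ?thesis
        proof (cases "x = y")
          case True
          have L: "KK TZ z (\<lambda>\<alpha>. del_tau \<alpha> = \<beta>) (\<lambda>_. True) = (\<Union>z'\<in>set_pmf \<pi>. (\<lambda>c. (a,\<pi>,z')#c) ` KK TZ z' (\<lambda>\<alpha>. del_tau \<alpha> = \<beta>') (\<lambda>_. True))"
            using KT[of "\<lambda>\<alpha>. del_tau \<alpha> = \<beta>" "\<lambda>_. True"] Act Cons True by simp
          have R: "KK TZ z (\<lambda>_. True) (\<lambda>\<alpha>. prefix \<beta> (del_tau \<alpha>)) = (\<Union>z'\<in>set_pmf \<pi>. (\<lambda>c. (a,\<pi>,z')#c) ` KK TZ z' (\<lambda>_. True) (\<lambda>\<alpha>. prefix \<beta>' (del_tau \<alpha>)))"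
            using KT[of "\<lambda>_. True" "\<lambda>\<alpha>. prefix \<beta> (del_tau \<alpha>)"] Act Cons True by simp
          show ?thesis unfolding L R by (rule UNeq) (rule IH)
        next
          case False
          have L: "KK TZ z (\<lambda>\<alpha>. del_tau \<alpha> = \<beta>) (\<lambda>_. True) = {}"
            using KT[of "\<lambda>\<alpha>. del_tau \<alpha> = \<beta>" "\<lambda>_. True"] Act Cons False by simp
          have R: "KK TZ z (\<lambda>_. True) (\<lambda>\<alpha>. prefix \<beta> (del_tau \<alpha>)) = {}"
            using KT[of "\<lambda>_. True" "\<lambda>\<alpha>. prefix \<beta> (del_tau \<alpha>)"] Act Cons False by simp
          show ?thesis unfolding L R ..
        qed
      qed
    qed
  qed
qed

fun mapc :: "('s,'a) pts \<Rightarrow> ('z \<Rightarrow> 's) \<Rightarrow> 'z \<Rightarrow> ('a act \<times> 'z pmf \<times> 'z) list \<Rightarrow> ('a act \<times> 's pmf \<times> 's) list" where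
  "mapc T corr z [] = []"
| "mapc T corr z ((a,\<pi>,z')#c) = (a, SOME \<pi>'. (corr z, a, \<pi>') \<in> T \<and> (\<forall>y\<in>set_pmf \<pi>. pmf \<pi> y = pmf \<pi>' (corr y)), corr z') # mapc T corr z' c"

definition matchc :: "('s,'a) pts \<Rightarrow> ('z,'a) pts \<Rightarrow> ('z \<Rightarrow> 's) \<Rightarrow> bool" where
  "matchc T TZ corr \<longleftrightarrow> (\<forall>(z, a, \<pi>) \<in> TZ. \<exists>\<pi>'. (corr z, a, \<pi>') \<in> T \<and>
          (\<forall>z' \<in> set_pmf \<pi>. pmf \<pi> z' = pmf \<pi>' (corr z')))"

lemma some_match:
  assumes "matchc T TZ corr" "(z,a,\<pi>)\<in>TZ"
  defines "\<pi>' \<equiv> SOME \<pi>'. (corr z, a, \<pi>') \<in> T \<and> (\<forall>y\<in>set_pmf \<pi>. pmf \<pi> y = pmf \<pi>' (corr y))"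
  shows "(corr z, a, \<pi>') \<in> T \<and> (\<forall>y\<in>set_pmf \<pi>. pmf \<pi> y = pmf \<pi>' (corr y))"
proof -
  have "\<exists>\<pi>'. (corr z, a, \<pi>') \<in> T \<and> (\<forall>y\<in>set_pmf \<pi>. pmf \<pi> y = pmf \<pi>' (corr y))"
    using assms(1,2) unfolding matchc_def by fast
  then show ?thesis unfolding \<pi>'_def by (rule someI_ex)
qed

lemma mapc_comps:
  assumes M: "matchc T TZ corr"
  shows "c \<in> comps TZ z \<Longrightarrow> mapc T corr z c \<in> comps T (corr z)"
proof (induction c arbitrary: z)
  case Nil then show ?case by simp
next
  case (Cons st c)
  obtain a \<pi> z' where st: "st = (a,\<pi>,z')" by (rule prod_cases3)
  have tz: "(z,a,\<pi>)\<in>TZ" and z': "z' \<in> set_pmf \<pi>" and c: "c \<in> comps TZ z'" using Cons(2) st by auto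
  define \<pi>' where "\<pi>' = (SOME \<pi>'. (corr z, a, \<pi>') \<in> T \<and> (\<forall>y\<in>set_pmf \<pi>. pmf \<pi> y = pmf \<pi>' (corr y)))"
  have sm: "(corr z, a, \<pi>') \<in> T" "\<forall>y\<in>set_pmf \<pi>. pmf \<pi> y = pmf \<pi>' (corr y)"
    using some_match[OF M tz] unfolding \<pi>'_def by auto
  have "corr z' \<in> set_pmf \<pi>'" using sm(2) z' by (metis set_pmf_iff)
  then show ?case using st sm(1) Cons.IH[OF c] unfolding \<pi>'_def by simp
qed

lemma fin_level: "finite {y \<in> set_pmf \<pi>. pmf \<pi> y = r}"
proof (rule ccontr)
  let ?S = "{y \<in> set_pmf \<pi>. pmf \<pi> y = r}"
  assume inf: "infinite ?S"
  then obtain y0 where "y0 \<in> ?S" using infinite_imp_nonempty by blast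
  then have rpos: "r > 0" using pmf_positive by fastforce
  obtain n :: nat where n: "1 / r < real n" using reals_Archimedean2 by blast
  obtain B where B: "finite B" "card B = n" "B \<subseteq> ?S" using infinite_arbitrarily_large[OF inf] by blast
  have "sum (pmf \<pi>) B = (\<Sum>y\<in>B. r)" using B(3) by (intro sum.cong refl) auto
  also have "\<dots> = real n * r" using B(2) by simp
  finally have "sum (pmf \<pi>) B = real n * r" .
  moreover have "sum (pmf \<pi>) B \<le> 1"
    using measure_measure_pmf_finite[OF B(1), of \<pi>] measure_pmf.prob_le_1 by metis
  moreover have "real n * r > 1" using n rpos by (simp add: field_simps)
  ultimately show False by linarith
qed

lemma preimage_fin:
  assumes det: "detp TZ" and M: "matchc T TZ corr"
  shows "finite {c \<in> comps TZ z. mapc T corr z c = d}"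
proof (induction d arbitrary: z)
  case Nil
  have "{c \<in> comps TZ z. mapc T corr z c = []} \<subseteq> {[]}"
  proof
    fix c assume "c \<in> {c \<in> comps TZ z. mapc T corr z c = []}"
    then show "c \<in> {[]}" by (cases c) auto
  qed
  then show ?case using finite_subset by blast
next
  case (Cons st d)
  obtain b \<rho> x where st: "st = (b,\<rho>,x)" by (rule prod_cases3)
  show ?case
  proof (cases "\<exists>a \<pi>. (z,a,\<pi>)\<in>TZ")
    case False
    have "{c \<in> comps TZ z. mapc T corr z c = st#d} \<subseteq> {}"
    proof
      fix c assume c: "c \<in> {c \<in> comps TZ z. mapc T corr z c = st#d}"
      then have "c \<in> comps TZ z" by blast
      then show "c \<in> {}"
      proof (rule comps_cases)
        assume "c = []" then show ?thesis using c by simp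
      next
        fix a \<pi> z' c' assume "(z,a,\<pi>)\<in>TZ" then show ?thesis using False by blast
      qed
    qed
    then show ?thesis using finite_subset by blast
  next
    case True
    then obtain a0 \<pi>0 where tz: "(z,a0,\<pi>0)\<in>TZ" by blast
    define \<pi>' where "\<pi>' = (SOME \<pi>'. (corr z, a0, \<pi>') \<in> T \<and> (\<forall>y\<in>set_pmf \<pi>0. pmf \<pi>0 y = pmf \<pi>' (corr y)))"
    have sm: "\<forall>y\<in>set_pmf \<pi>0. pmf \<pi>0 y = pmf \<pi>' (corr y)"
      using some_match[OF M tz] unfolding \<pi>'_def by auto
    let ?Z = "{z' \<in> set_pmf \<pi>0. corr z' = x}"
    have finZ: "finite ?Z"
      by (rule finite_subset[OF _ fin_level[of \<pi>0 "pmf \<pi>' x"]]) (use sm in auto)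
    have "{c \<in> comps TZ z. mapc T corr z c = st#d} \<subseteq>
          (\<Union>z'\<in>?Z. (\<lambda>c. (a0,\<pi>0,z')#c) ` {c \<in> comps TZ z'. mapc T corr z' c = d})"
    proof
      fix c assume c: "c \<in> {c \<in> comps TZ z. mapc T corr z c = st#d}"
      then have "c \<in> comps TZ z" by blast
      then show "c \<in> (\<Union>z'\<in>?Z. (\<lambda>c. (a0,\<pi>0,z')#c) ` {c \<in> comps TZ z'. mapc T corr z' c = d})"
      proof (rule comps_cases)
        assume "c = []" then show ?thesis using c by simp
      next
        fix a \<pi> z' c' assume h: "c = (a,\<pi>,z')#c'" "(z,a,\<pi>)\<in>TZ" "z'\<in>set_pmf \<pi>" "c'\<in>comps TZ z'"
        have "a = a0" "\<pi> = \<pi>0" using det h(2) tz unfolding detp_def by blast+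
        then show ?thesis using h c st by auto
      qed
    qed
    moreover have "finite (\<Union>z'\<in>?Z. (\<lambda>c. (a0,\<pi>0,z')#c) ` {c \<in> comps TZ z'. mapc T corr z' c = d})"
      using finZ Cons.IH by blast
    ultimately show ?thesis using finite_subset by blast
  qed
qed

lemma res_props:
  assumes "is_resolution T s ZS TZ corr z0"
  shows "detp TZ" "matchc T TZ corr" "corr z0 = s"
  using assms unfolding is_resolution_def detp_def matchc_def by blast+

lemma res_finite:
  assumes R: "is_resolution T s ZS TZ corr z0" and F: "finite (comps T s)"
  shows "finite (comps TZ z0)"
proof -
  note P = res_props[OF R]
  have "comps TZ z0 \<subseteq> (\<Union>d\<in>comps T s. {c \<in> comps TZ z0. mapc T corr z0 c = d})"
    using mapc_comps[OF P(2)] P(3) by blast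
  moreover have "finite (\<Union>d\<in>comps T s. {c \<in> comps TZ z0. mapc T corr z0 c = d})"
    using F preimage_fin[OF P(1,2)] by blast
  ultimately show ?thesis using finite_subset by blast
qed

lemma ftrace_tracing[simp]: "ftrace (tracing_formula \<alpha>) = \<alpha>"
  by (induction \<alpha>) auto

lemma Cmax_KK: "Cmax TZ z = KK TZ z (\<lambda>_. True) (\<lambda>_. True)"
  by (simp add: Cmax_def KK_def)

lemma Cw_KK: "Cw TZ z \<beta> = KK TZ z (\<lambda>\<alpha>. del_tau \<alpha> = \<beta>) (\<lambda>_. True)"
  by (simp add: Cw_def KK_def trace_equiv_def)

lemma KK_filter: "KK TZ z (\<lambda>_. True) P = {c \<in> Cmax TZ z. P (tr c)}"
  by (auto simp: Cmax_def KK_def)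

definition FF :: "('z,'a) pts \<Rightarrow> 'z \<Rightarrow> 'a list \<Rightarrow> real" where
  "FF TZ z \<beta> = PrS {c \<in> Cmax TZ z. del_tau (tr c) = \<beta>}"

lemma mim_sum:
  assumes fin: "finite (Cmax TZ z)"
  shows "(\<Sum>\<Phi>' \<in> {\<Phi>'. mimicking TZ z \<Phi>' \<noteq> 0 \<and> formula_equiv \<Phi>' \<Phi>}. mimicking TZ z \<Phi>') = FF TZ z (del_tau (ftrace \<Phi>))"
proof -
  define \<beta> where "\<beta> = del_tau (ftrace \<Phi>)"
  define A where "A = {\<alpha> \<in> tr ` Cmax TZ z. del_tau \<alpha> = \<beta>}"
  have finA: "finite A" unfolding A_def using fin by simp
  have inj: "inj_on tracing_formula A" by (rule inj_onI) (metis ftrace_tracing)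
  have sub: "{\<Phi>'. mimicking TZ z \<Phi>' \<noteq> 0 \<and> formula_equiv \<Phi>' \<Phi>} \<subseteq> tracing_formula ` A"
  proof
    fix \<Phi>' assume "\<Phi>' \<in> {\<Phi>'. mimicking TZ z \<Phi>' \<noteq> 0 \<and> formula_equiv \<Phi>' \<Phi>}"
    then have h: "mimicking TZ z \<Phi>' \<noteq> 0" "formula_equiv \<Phi>' \<Phi>" by auto
    from h(1) obtain \<alpha> where \<alpha>: "\<alpha> \<in> tr ` Cmax TZ z" "\<Phi>' = tracing_formula \<alpha>"
      unfolding mimicking_def by (auto split: if_splits)
    have "del_tau \<alpha> = \<beta>" using h(2) \<alpha>(2) unfolding formula_equiv_def trace_equiv_def \<beta>_def by simp
    then show "\<Phi>' \<in> tracing_formula ` A" using \<alpha> unfolding A_def by blast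
  qed
  have "(\<Sum>\<Phi>' \<in> {\<Phi>'. mimicking TZ z \<Phi>' \<noteq> 0 \<and> formula_equiv \<Phi>' \<Phi>}. mimicking TZ z \<Phi>') =
        (\<Sum>\<Phi>' \<in> tracing_formula ` A. mimicking TZ z \<Phi>')"
  proof (rule sum.mono_neutral_left[OF _ sub])
    show "finite (tracing_formula ` A)" using finA by simp
    show "\<forall>i\<in>tracing_formula ` A - {\<Phi>'. mimicking TZ z \<Phi>' \<noteq> 0 \<and> formula_equiv \<Phi>' \<Phi>}. mimicking TZ z i = 0"
    proof
      fix i assume i: "i \<in> tracing_formula ` A - {\<Phi>'. mimicking TZ z \<Phi>' \<noteq> 0 \<and> formula_equiv \<Phi>' \<Phi>}"
      then obtain \<alpha> where "\<alpha> \<in> A" "i = tracing_formula \<alpha>" by blast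
      then have "formula_equiv i \<Phi>" unfolding A_def formula_equiv_def trace_equiv_def \<beta>_def by simp
      then show "mimicking TZ z i = 0" using i by blast
    qed
  qed
  also have "\<dots> = (\<Sum>\<alpha>\<in>A. mimicking TZ z (tracing_formula \<alpha>))"
    by (simp add: sum.reindex[OF inj])
  also have "\<dots> = (\<Sum>\<alpha>\<in>A. PrS (Cmax_tr TZ z \<alpha>))"
    by (rule sum.cong[OF refl]) (auto simp: mimicking_def A_def)
  also have "\<dots> = FF TZ z \<beta>"
  proof -
    define C where "C = {c \<in> Cmax TZ z. del_tau (tr c) = \<beta>}"
    have finC: "finite C" unfolding C_def using fin by simp
    have "FF TZ z \<beta> = (\<Sum>\<alpha>\<in>tr ` C. \<Sum>c\<in>{c. c \<in> C \<and> tr c = \<alpha>}. Pr c)"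
      unfolding FF_def PrS_def C_def[symmetric] by (rule sum.image_gen[OF finC])
    also have "tr ` C = A" unfolding A_def C_def by auto
    also have "(\<Sum>\<alpha>\<in>A. \<Sum>c\<in>{c. c \<in> C \<and> tr c = \<alpha>}. Pr c) = (\<Sum>\<alpha>\<in>A. PrS (Cmax_tr TZ z \<alpha>))"
      by (rule sum.cong[OF refl]) (auto simp: PrS_def Cmax_tr_def A_def C_def intro!: sum.cong)
    finally show ?thesis by simp
  qed
  finally show ?thesis unfolding \<beta>_def .
qed

lemma tdf_FF:
  assumes "finite (Cmax TZ1 z1)" "finite (Cmax TZ2 z2)"
  shows "tdf_equiv (mimicking TZ1 z1) (mimicking TZ2 z2) \<longleftrightarrow> (\<forall>\<beta>. FF TZ1 z1 \<beta> = FF TZ2 z2 \<beta>)"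
proof
  assume "tdf_equiv (mimicking TZ1 z1) (mimicking TZ2 z2)"
  then have h: "FF TZ1 z1 (del_tau (ftrace \<Phi>)) = FF TZ2 z2 (del_tau (ftrace \<Phi>))" for \<Phi>
    unfolding tdf_equiv_def using mim_sum[OF assms(1)] mim_sum[OF assms(2)] by metis
  show "\<forall>\<beta>. FF TZ1 z1 \<beta> = FF TZ2 z2 \<beta>"
  proof
    fix \<beta> show "FF TZ1 z1 \<beta> = FF TZ2 z2 \<beta>" using h[of "tracing_formula (map Act \<beta>)"] by simp
  qed
next
  assume "\<forall>\<beta>. FF TZ1 z1 \<beta> = FF TZ2 z2 \<beta>"
  then show "tdf_equiv (mimicking TZ1 z1) (mimicking TZ2 z2)"
    unfolding tdf_equiv_def using mim_sum[OF assms(1)] mim_sum[OF assms(2)] by metis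
qed

lemma Cw_FF:
  assumes det: "detp TZ" and fin: "finite (comps TZ z)" and D: "finite D" "del_tau ` tr ` Cmax TZ z \<subseteq> D"
  shows "PrS (Cw TZ z \<beta>) = (\<Sum>\<delta>\<in>{\<delta>\<in>D. prefix \<beta> \<delta>}. FF TZ z \<delta>)"
proof -
  obtain n where n: "\<forall>c\<in>comps TZ z. length c \<le> n"
    using fin by (metis finite_nat_set_iff_bounded_le finite_imageI imageI)
  have finM: "finite (Cmax TZ z)" using fin by (rule finite_subset[rotated]) (auto simp: Cmax_def)
  define C where "C = {c \<in> Cmax TZ z. prefix \<beta> (del_tau (tr c))}"
  have finC: "finite C" unfolding C_def using finM by simp
  have "PrS (Cw TZ z \<beta>) = PrS C"
    unfolding Cw_KK KK_main[OF det fin n] KK_filter C_def ..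
  also have "\<dots> = (\<Sum>\<delta>\<in>(\<lambda>c. del_tau (tr c)) ` C. \<Sum>c\<in>{c. c \<in> C \<and> del_tau (tr c) = \<delta>}. Pr c)"
    unfolding PrS_def by (rule sum.image_gen[OF finC])
  also have "\<dots> = (\<Sum>\<delta>\<in>(\<lambda>c. del_tau (tr c)) ` C. FF TZ z \<delta>)"
    by (rule sum.cong[OF refl]) (auto simp: FF_def PrS_def C_def intro!: sum.cong)
  also have "\<dots> = (\<Sum>\<delta>\<in>{\<delta>\<in>D. prefix \<beta> \<delta>}. FF TZ z \<delta>)"
  proof (rule sum.mono_neutral_left)
    show "finite {\<delta>\<in>D. prefix \<beta> \<delta>}" using D(1) by simp
    show "(\<lambda>c. del_tau (tr c)) ` C \<subseteq> {\<delta>\<in>D. prefix \<beta> \<delta>}" using D(2) unfolding C_def by auto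
    show "\<forall>i\<in>{\<delta>\<in>D. prefix \<beta> \<delta>} - (\<lambda>c. del_tau (tr c)) ` C. FF TZ z i = 0"
    proof
      fix i assume i: "i \<in> {\<delta>\<in>D. prefix \<beta> \<delta>} - (\<lambda>c. del_tau (tr c)) ` C"
      have e: "{c \<in> Cmax TZ z. del_tau (tr c) = i} = {}" using i unfolding C_def by auto
      show "FF TZ z i = 0" unfolding FF_def e by simp
    qed
  qed
  finally show ?thesis .
qed

lemma comb:
  fixes Fa Fb :: "'a list \<Rightarrow> real"
  assumes D: "finite D" and z1: "\<And>\<delta>. \<delta> \<notin> D \<Longrightarrow> Fa \<delta> = 0" and z2: "\<And>\<delta>. \<delta> \<notin> D \<Longrightarrow> Fb \<delta> = 0"
    and H: "\<And>\<beta>. (\<Sum>\<delta>\<in>{\<delta>\<in>D. prefix \<beta> \<delta>}. Fa \<delta>) = (\<Sum>\<delta>\<in>{\<delta>\<in>D. prefix \<beta> \<delta>}. Fb \<delta>)"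
  shows "Fa \<beta> = Fb \<beta>"
proof (rule ccontr)
  assume ne: "Fa \<beta> \<noteq> Fb \<beta>"
  define X where "X = {\<delta>\<in>D. Fa \<delta> \<noteq> Fb \<delta>}"
  have "\<beta> \<in> X" using ne z1 z2 unfolding X_def by (cases "\<beta> \<in> D") auto
  have finX: "finite X" unfolding X_def using D by simp
  define m where "m = Max (length ` X)"
  have "m \<in> length ` X" unfolding m_def using finX \<open>\<beta> \<in> X\<close> by (intro Max_in) auto
  then obtain \<delta>0 where d0: "\<delta>0 \<in> X" "length \<delta>0 = m" by blast
  have maxm: "length \<delta> \<le> m" if "\<delta> \<in> X" for \<delta> unfolding m_def using finX that by simp
  have split: "{\<delta>\<in>D. prefix \<delta>0 \<delta>} = insert \<delta>0 {\<delta>\<in>D. strict_prefix \<delta>0 \<delta>}"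
    using d0(1) unfolding X_def by (auto simp: strict_prefix_def)
  have fs: "finite {\<delta>\<in>D. strict_prefix \<delta>0 \<delta>}" using D by simp
  have nin: "\<delta>0 \<notin> {\<delta>\<in>D. strict_prefix \<delta>0 \<delta>}" by simp
  have eq: "(\<Sum>\<delta>\<in>{\<delta>\<in>D. strict_prefix \<delta>0 \<delta>}. Fa \<delta>) = (\<Sum>\<delta>\<in>{\<delta>\<in>D. strict_prefix \<delta>0 \<delta>}. Fb \<delta>)"
  proof (rule sum.cong[OF refl])
    fix \<delta> assume "\<delta> \<in> {\<delta>\<in>D. strict_prefix \<delta>0 \<delta>}"
    then have "\<delta> \<in> D" "length \<delta> > m" using d0(2) prefix_length_less by auto
    then show "Fa \<delta> = Fb \<delta>" using maxm unfolding X_def by force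
  qed
  have "Fa \<delta>0 + (\<Sum>\<delta>\<in>{\<delta>\<in>D. strict_prefix \<delta>0 \<delta>}. Fa \<delta>) = Fb \<delta>0 + (\<Sum>\<delta>\<in>{\<delta>\<in>D. strict_prefix \<delta>0 \<delta>}. Fb \<delta>)"
    using H[of \<delta>0] unfolding split sum.insert[OF fs nin] .
  then have "Fa \<delta>0 = Fb \<delta>0" using eq by simp
  then show False using d0(1) unfolding X_def by simp
qed

theorem theorem12:
  fixes T :: "('s, 'a) pts" and s t :: 's
    and ZS1 :: "'z1 set" and TZ1 :: "('z1, 'a) pts" and corr1 :: "'z1 \<Rightarrow> 's" and zs :: 'z1
    and ZS2 :: "'z2 set" and TZ2 :: "('z2, 'a) pts" and corr2 :: "'z2 \<Rightarrow> 's" and zt :: 'z2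
  assumes "fin_supported T" and "image_finite T"
    and "finite_process T s" and "finite_process T t"
    and "is_resolution T s ZS1 TZ1 corr1 zs"
    and "is_resolution T t ZS2 TZ2 corr2 zt"
  shows "tdf_equiv (mimicking TZ1 zs) (mimicking TZ2 zt) \<longleftrightarrow>
         (\<forall>\<alpha> :: 'a list. PrS (Cw TZ1 zs \<alpha>) = PrS (Cw TZ2 zt \<alpha>))"
proof -
  have f1: "finite (comps TZ1 zs)" using res_finite[OF assms(5)] assms(3) unfolding finite_process_def by blast
  have f2: "finite (comps TZ2 zt)" using res_finite[OF assms(6)] assms(4) unfolding finite_process_def by blast
  have d1: "detp TZ1" using res_props[OF assms(5)] by blast
  have d2: "detp TZ2" using res_props[OF assms(6)] by blast
  have m1: "finite (Cmax TZ1 zs)" using f1 by (rule finite_subset[rotated]) (auto simp: Cmax_def)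
  have m2: "finite (Cmax TZ2 zt)" using f2 by (rule finite_subset[rotated]) (auto simp: Cmax_def)
  define D where "D = del_tau ` tr ` Cmax TZ1 zs \<union> del_tau ` tr ` Cmax TZ2 zt"
  have D: "finite D" unfolding D_def using m1 m2 by simp
  have W1: "PrS (Cw TZ1 zs \<beta>) = (\<Sum>\<delta>\<in>{\<delta>\<in>D. prefix \<beta> \<delta>}. FF TZ1 zs \<delta>)" for \<beta>
    by (rule Cw_FF[OF d1 f1 D]) (auto simp: D_def)
  have W2: "PrS (Cw TZ2 zt \<beta>) = (\<Sum>\<delta>\<in>{\<delta>\<in>D. prefix \<beta> \<delta>}. FF TZ2 zt \<delta>)" for \<beta>
    by (rule Cw_FF[OF d2 f2 D]) (auto simp: D_def)
  have z1: "FF TZ1 zs \<delta> = 0" if "\<delta> \<notin> D" for \<delta>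
  proof -
    have e: "{c \<in> Cmax TZ1 zs. del_tau (tr c) = \<delta>} = {}" using that unfolding D_def by auto
    show ?thesis unfolding FF_def e by simp
  qed
  have z2: "FF TZ2 zt \<delta> = 0" if "\<delta> \<notin> D" for \<delta>
  proof -
    have e: "{c \<in> Cmax TZ2 zt. del_tau (tr c) = \<delta>} = {}" using that unfolding D_def by auto
    show ?thesis unfolding FF_def e by simp
  qed
  show ?thesis
    unfolding tdf_FF[OF m1 m2] W1 W2
  proof
    assume "\<forall>\<beta>. FF TZ1 zs \<beta> = FF TZ2 zt \<beta>"
    then show "\<forall>\<beta>. (\<Sum>\<delta>\<in>{\<delta>\<in>D. prefix \<beta> \<delta>}. FF TZ1 zs \<delta>) = (\<Sum>\<delta>\<in>{\<delta>\<in>D. prefix \<beta> \<delta>}. FF TZ2 zt \<delta>)"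
      by simp
  next
    assume H: "\<forall>\<beta>. (\<Sum>\<delta>\<in>{\<delta>\<in>D. prefix \<beta> \<delta>}. FF TZ1 zs \<delta>) = (\<Sum>\<delta>\<in>{\<delta>\<in>D. prefix \<beta> \<delta>}. FF TZ2 zt \<delta>)"
    show "\<forall>\<beta>. FF TZ1 zs \<beta> = FF TZ2 zt \<beta>"
    proof
      fix \<beta> show "FF TZ1 zs \<beta> = FF TZ2 zt \<beta>"
        by (rule comb[where Fa="FF TZ1 zs" and Fb="FF TZ2 zt", OF D z1 z2]) (use H in blast)+
    qed
  qed
qed

end
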